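(* Let $\Sigma'$ be a set of FDs over $R$ (each with a single right-hand-side attribute), $I'$ an instance, $C\subseteq I'$ a set of tuples, $t$ a tuple over $R$, and $F\subseteq R$ a nonempty set of attributes. Run the procedure Find_Assignment$(t,F,I',\Sigma',C)$ described in the context. Then the procedure terminates and: (Soundness) if it returns a tuple $t_c$, then $t_c[B]=t[B]$ for every $B\in F$, and for every $t'\in I'\setminus C$ and every FD $X\rightarrow A\in\Sigma'$ it is not the case that $t_c[X]=t'[X]$ and $t_c[A]\neq t'[A]$; (Completeness) if there exists a tuple $t_g$ (cells holding constants or variables) with $t_g[B]=t[B]$ for all $B\in F$ such that for every $t'\in I'\setminus C$ the pair $(t_g,t')$ violates no FD of $\Sigma'$, then the procedure does not return $\phi$.
   Context: Instances are V-instances: each cell $t[A]$ holds a constant of $Dom(A)$ or a variable $v^A_i$; two cells are equal iff they hold the same constant or the same variable. For a set of attributes $X$, $t[X]=t'[X]$ means equality on every attribute of $X$. A pair of tuples $(t_1,t_2)$ violates $X\rightarrow A$ iff $t_1[X]=t_2[X]$ and $t_1[A]\neq t_2[A]$. Procedure Find_Assignment$(t,F,I',\Sigma',C)$: (1) Set $Fixed:=F$ and build a tuple $t_c$ with $t_c[B]=t[B]$ for $B\in Fixed$ and $t_c[B]$ equal to a new variable (not occurring anywhere else) for $B\notin Fixed$. (2) While there exist $t'\in I'\setminus C$ and an FD $X\rightarrow A\in\Sigma'$ with $t_c[X]=t'[X]$ and $t_c[A]\neq t'[A]$: if $A\in Fixed$, return $\phi$ (no assignment); otherwise set $t_c[A]:=t'[A]$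 and add $A$ to $Fixed$. (3) When no such $t'$ and FD exist, return $t_c$. *)

theory Defs
  imports Main
begin

text \<open>Cells of a V-instance: a constant, or a variable v^A_i (indexed by attribute A and i).\<close>
datatype ('a, 'c) cell = Const 'c | Var 'a nat

type_synonym ('a, 'c) tuple = "'a \<Rightarrow> ('a, 'c) cell"

type_synonym 'a fd = "'a set \<times> 'a"

definition agree :: "('a, 'c) tuple \<Rightarrow> ('a, 'c) tuple \<Rightarrow> 'a set \<Rightarrow> bool" where
  "agree t1 t2 X \<longleftrightarrow> (\<forall>B\<in>X. t1 B = t2 B)"

definition violates :: "('a, 'c) tuple \<Rightarrow> ('a, 'c) tuple \<Rightarrow> 'a fd \<Rightarrow> bool" where
  "violates t1 t2 fd \<longleftrightarrow> agree t1 t2 (fst fd) \<and> t1 (snd fd) \<noteq> t2 (snd fd)"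

definition is_var :: "('a, 'c) cell \<Rightarrow> bool" where
  "is_var c \<longleftrightarrow> (\<exists>A i. c = Var A i)"

text \<open>Step (1): admissible initial tuples t_c. Attributes in F copy t; every other attribute
  of R gets a new variable, occurring nowhere in t, in I', or elsewhere in t_c.\<close>
definition fa_init ::
  "'a set \<Rightarrow> ('a, 'c) tuple \<Rightarrow> 'a set \<Rightarrow> ('a, 'c) tuple set \<Rightarrow> ('a, 'c) tuple \<Rightarrow> bool" where
  "fa_init R t F I' tc \<longleftrightarrow>
     (\<forall>B\<in>F. tc B = t B) \<and>
     (\<forall>B\<in>R - F. is_var (tc B) \<and>
        (\<forall>D\<in>R. tc B \<noteq> t D) \<and>
        (\<forall>t'\<in>I'. \<forall>D\<in>R. tc B \<noteq> t' D) \<and>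
        (\<forall>D\<in>R. D \<noteq> B \<longrightarrow> tc B \<noteq> tc D))"

datatype ('a, 'c) fa_state =
    Running "('a, 'c) tuple" "'a set"   \<comment> \<open>current t_c and the set Fixed\<close>
  | Returned "('a, 'c) tuple"
  | NoAssignment

text \<open>One step of the (nondeterministic) while loop of Find_Assignment(t,F,I',Sigma',C).\<close>
inductive fa_step ::
  "('a, 'c) tuple set \<Rightarrow> 'a fd set \<Rightarrow> ('a, 'c) tuple set \<Rightarrow>
   ('a, 'c) fa_state \<Rightarrow> ('a, 'c) fa_state \<Rightarrow> bool"
  for I' Sigma' C where
  fail: "\<lbrakk> t' \<in> I' - C; (X, A) \<in> Sigma'; agree tc t' X; tc A \<noteq> t' A; A \<in> Fixed \<rbrakk>
         \<Longrightarrow> fa_step I' Sigma' C (Running tc Fixed) NoAssignment"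
| assign: "\<lbrakk> t' \<in> I' - C; (X, A) \<in> Sigma'; agree tc t' X; tc A \<noteq> t' A; A \<notin> Fixed \<rbrakk>
         \<Longrightarrow> fa_step I' Sigma' C (Running tc Fixed) (Running (tc(A := t' A)) (insert A Fixed))"
| ret: "\<lbrakk> \<not> (\<exists>t'\<in>I' - C. \<exists>(X, A)\<in>Sigma'. agree tc t' X \<and> tc A \<noteq> t' A) \<rbrakk>
         \<Longrightarrow> fa_step I' Sigma' C (Running tc Fixed) (Returned tc)"

end

theory Submission
  imports Defs
begin

definition Inv1 :: "'a set \<Rightarrow> 'a set \<Rightarrow> ('a,'c) tuple \<Rightarrow> ('a,'c) tuple \<Rightarrow> ('a,'c) fa_state \<Rightarrow> bool" where
  "Inv1 R F t tc0 s = (case s of Running tc Fx \<Rightarrow> F \<subseteq> Fx \<and> Fx \<subseteq> R \<and> (\<forall>B\<in>F. tc B = t B) \<and> (\<forall>B\<in>R-Fx. tc B = tc0 B)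
     | Returned tc \<Rightarrow> (\<forall>B\<in>F. tc B = t B) | NoAssignment \<Rightarrow> True)"

definition Inv2 :: "'a set \<Rightarrow> 'a set \<Rightarrow> ('a,'c) tuple \<Rightarrow> ('a,'c) tuple \<Rightarrow> ('a,'c) fa_state \<Rightarrow> bool" where
  "Inv2 R F tc0 tg s = (case s of Running tc Fx \<Rightarrow> F \<subseteq> Fx \<and> Fx \<subseteq> R \<and> (\<forall>B\<in>R-Fx. tc B = tc0 B) \<and> (\<forall>B\<in>Fx. tc B = tg B)
     | Returned tc \<Rightarrow> True | NoAssignment \<Rightarrow> False)"

lemma rt_inv:
  assumes "(fa_step I' S C)\<^sup>*\<^sup>* s0 s" "P s0" "\<And>s s'. fa_step I' S C s s' \<Longrightarrow> P s \<Longrightarrow> P s'"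
  shows "P s"
  using assms(1) by (induction rule: rtranclp_induct) (auto intro: assms(2,3))

lemma step1:
  assumes AR: "\<forall>(X, A)\<in>S. X \<subseteq> R \<and> A \<in> R"
    and st: "fa_step I' S C s s'" and inv: "Inv1 R F t tc0 s"
  shows "Inv1 R F t tc0 s'"
  using st
proof cases
  case (assign t' X A tc Fixed)
  then have "A \<in> R" using AR by auto
  then show ?thesis using inv assign unfolding Inv1_def by auto
next
  case (ret tc Fixed)
  then show ?thesis using inv unfolding Inv1_def by auto
qed (auto simp: Inv1_def)

lemma agree_fixed:
  assumes AR: "\<forall>(X, A)\<in>S. X \<subseteq> R \<and> A \<in> R"
    and init: "fa_init R t F I' tc0"
    and FF: "F \<subseteq> Fx" and fr: "\<forall>B\<in>R-Fx. tc B = tc0 B" and fx: "\<forall>B\<in>Fx. tc B = tg B"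
    and t': "t' \<in> I'" and XA: "(X, A) \<in> S" and ag: "agree tc t' X"
  shows "agree tg t' X"
  unfolding agree_def
proof
  fix B assume B: "B \<in> X"
  have BR: "B \<in> R" using AR XA B by auto
  have "B \<in> Fx"
  proof (rule ccontr)
    assume "B \<notin> Fx"
    then have "tc B = tc0 B" "B \<in> R - F" using fr BR FF by auto
    moreover have "tc B = t' B" using ag B unfolding agree_def by auto
    ultimately show False using init t' BR unfolding fa_init_def by metis
  qed
  then show "tg B = t' B" using fx ag B unfolding agree_def by auto
qed

lemma step2:
  assumes AR: "\<forall>(X, A)\<in>S. X \<subseteq> R \<and> A \<in> R"
    and init: "fa_init R t F I' tc0"
    and good: "\<forall>t'\<in>I' - C. \<forall>fd\<in>S. \<not> violates tg t' fd"
    and st: "fa_step I' S C s s'" and inv: "Inv2 R F tc0 tg s"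
  shows "Inv2 R F tc0 tg s'"
  using st
proof cases
  case (fail t' X A tc Fixed)
  then have "agree tg t' X" using agree_fixed[OF AR init, of Fixed tc tg t' X A] inv
    unfolding Inv2_def by auto
  moreover have "tg A = tc A" using inv fail unfolding Inv2_def by auto
  ultimately have "violates tg t' (X, A)" using fail unfolding violates_def by auto
  then show ?thesis using good fail by auto
next
  case (assign t' X A tc Fixed)
  then have ag: "agree tg t' X" using agree_fixed[OF AR init, of Fixed tc tg t' X A] inv
    unfolding Inv2_def by auto
  have "tg A = t' A" using good assign ag unfolding violates_def by force
  moreover have "A \<in> R" using AR assign by auto
  ultimately show ?thesis using inv assign unfolding Inv2_def by auto
qed (auto simp: Inv2_def)

lemma term_run:
  assumes AR: "\<forall>(X, A)\<in>S. X \<subseteq> R \<and> A \<in> R" and fin: "finite R"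
  shows "Fx \<subseteq> R \<Longrightarrow> \<exists>r. (fa_step I' S C)\<^sup>*\<^sup>* (Running tc Fx) r \<and> (r = NoAssignment \<or> (\<exists>tc. r = Returned tc))"
proof (induction "card (R - Fx)" arbitrary: tc Fx rule: less_induct)
  case less
  show ?case
  proof (cases "\<exists>t'\<in>I' - C. \<exists>(X, A)\<in>S. agree tc t' X \<and> tc A \<noteq> t' A")
    case True
    then obtain t' X A where h: "t' \<in> I' - C" "(X, A) \<in> S" "agree tc t' X" "tc A \<noteq> t' A" by auto
    show ?thesis
    proof (cases "A \<in> Fx")
      case True
      then have "fa_step I' S C (Running tc Fx) NoAssignment" using h by (intro fa_step.fail) auto
      then show ?thesis by blast
    next
      case False
      then have s: "fa_step I' S C (Running tc Fx) (Running (tc(A := t' A)) (insert A Fx))"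
        using h by (intro fa_step.assign) auto
      have AR': "A \<in> R" using AR h by auto
      have "card (R - insert A Fx) < card (R - Fx)"
        using False AR' fin by (intro psubset_card_mono) auto
      then obtain r where "(fa_step I' S C)\<^sup>*\<^sup>* (Running (tc(A := t' A)) (insert A Fx)) r"
        "r = NoAssignment \<or> (\<exists>tc. r = Returned tc)"
        using less AR' by blast
      then show ?thesis using s converse_rtranclp_into_rtranclp[of "fa_step I' S C", OF s] by blast
    qed
  next
    case False
    then have "fa_step I' S C (Running tc Fx) (Returned tc)" by (intro fa_step.ret)
    then show ?thesis by blast
  qed
qed

lemma no_inf:
  assumes AR: "\<forall>(X, A)\<in>S. X \<subseteq> R \<and> A \<in> R" and fin: "finite R" and FR: "F \<subseteq> R"
  shows "\<not> (\<exists>f. f 0 = Running tc0 F \<and> (\<forall>n. fa_step I' S C (f n) (f (Suc n))))"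
proof
  assume "\<exists>f. f 0 = Running tc0 F \<and> (\<forall>n. fa_step I' S C (f n) (f (Suc n)))"
  then obtain f where f0: "f 0 = Running tc0 F" and fs: "\<And>n. fa_step I' S C (f n) (f (Suc n))" by blast
  have run: "\<exists>tc Fx. f n = Running tc Fx" for n
    using fs[of n] by (cases rule: fa_step.cases) auto
  have "\<exists>tc Fx. f n = Running tc Fx \<and> Fx \<subseteq> R \<and> card (R - Fx) + n \<le> card (R - F)" for n
  proof (induction n)
    case 0 then show ?case using f0 FR by auto
  next
    case (Suc n)
    then obtain tc Fx where h: "f n = Running tc Fx" "Fx \<subseteq> R" "card (R - Fx) + n \<le> card (R - F)" by blast
    obtain tc' Fx' where h2: "f (Suc n) = Running tc' Fx'" using run by blast
    have "fa_step I' S C (Running tc Fx) (Running tc' Fx')" using fs[of n] h h2 by simp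
    then obtain A where A: "A \<notin> Fx" "Fx' = insert A Fx" "A \<in> R"
      using AR by (cases rule: fa_step.cases) auto
    have "card (R - Fx') < card (R - Fx)"
      using A fin by (intro psubset_card_mono) auto
    then show ?case using h h2 A by auto
  qed
  from this[of "Suc (card (R - F))"] show False by auto
qed

lemma init_exists:
  assumes fin: "finite R" and finI: "finite I'"
  shows "\<exists>tc0. fa_init R t F I' tc0"
proof -
  define U where "U = t ` R \<union> (\<Union>t'\<in>I'. t' ` R)"
  have fU: "finite U" using fin finI unfolding U_def by auto
  define idx :: "('a,'b) cell \<Rightarrow> nat" where "idx c = (case c of Const _ \<Rightarrow> 0 | Var _ i \<Rightarrow> i)" for c
  define N where "N = Suc (Max (idx ` U))"
  have nU: "Var B N \<notin> U" for B
  proof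
    assume "Var B N \<in> U"
    then have "idx (Var B N) \<le> Max (idx ` U)" using fU by (intro Max_ge) auto
    then show False unfolding idx_def N_def by simp
  qed
  define tc0 where "tc0 B = (if B \<in> F then t B else Var B N)" for B
  have "fa_init R t F I' tc0"
    unfolding fa_init_def
  proof (intro conjI ballI impI)
    fix B assume "B \<in> F" then show "tc0 B = t B" unfolding tc0_def by simp
  next
    fix B assume "B \<in> R - F" then show "is_var (tc0 B)" unfolding tc0_def is_var_def by auto
  next
    fix B D assume "B \<in> R - F" "D \<in> R"
    then show "tc0 B \<noteq> t D" using nU[of B] unfolding tc0_def U_def by auto
  next
    fix B t' D assume "B \<in> R - F" "t' \<in> I'" "D \<in> R"
    then show "tc0 B \<noteq> t' D" using nU[of B] unfolding tc0_def U_def by auto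
  next
    fix B D assume "B \<in> R - F" "D \<in> R" "D \<noteq> B"
    then show "tc0 B \<noteq> tc0 D" using nU[of B] unfolding tc0_def U_def by auto
  qed
  then show ?thesis by blast
qed

theorem lemma2:
  fixes R F :: "'a set" and t :: "('a, 'c) tuple"
    and I' C :: "('a, 'c) tuple set" and Sigma' :: "'a fd set"
  assumes "finite R" and "finite I'" and "finite Sigma'"
    and "\<forall>(X, A)\<in>Sigma'. X \<subseteq> R \<and> A \<in> R"
    and "C \<subseteq> I'"
    and "F \<subseteq> R" and "F \<noteq> {}"
  shows
    \<comment> \<open>an initial tuple t_c as in step (1) exists\<close>
    "(\<exists>tc0. fa_init R t F I' tc0) \<and>
     (\<forall>tc0. fa_init R t F I' tc0 \<longrightarrow>
        \<comment> \<open>termination: no infinite run, and some run reaches a final answer\<close>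
        (\<not> (\<exists>f. f 0 = Running tc0 F \<and> (\<forall>n. fa_step I' Sigma' C (f n) (f (Suc n))))) \<and>
        (\<exists>r. (fa_step I' Sigma' C)\<^sup>*\<^sup>* (Running tc0 F) r \<and>
             (r = NoAssignment \<or> (\<exists>tc. r = Returned tc))) \<and>
        \<comment> \<open>soundness\<close>
        (\<forall>tc. (fa_step I' Sigma' C)\<^sup>*\<^sup>* (Running tc0 F) (Returned tc) \<longrightarrow>
            (\<forall>B\<in>F. tc B = t B) \<and>
            (\<forall>t'\<in>I' - C. \<forall>(X, A)\<in>Sigma'. \<not> (agree tc t' X \<and> tc A \<noteq> t' A))) \<and>
        \<comment> \<open>completeness\<close>
        ((\<exists>tg. (\<forall>B\<in>F. tg B = t B) \<and>
               (\<forall>t'\<in>I' - C. \<forall>fd\<in>Sigma'. \<not> violates tg t' fd)) \<longrightarrow>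
            \<not> (fa_step I' Sigma' C)\<^sup>*\<^sup>* (Running tc0 F) NoAssignment))"
proof (intro conjI allI impI)
  show "\<exists>tc0. fa_init R t F I' tc0" using init_exists assms by blast
next
  fix tc0 assume init: "fa_init R t F I' tc0"
  show "\<not> (\<exists>f. f 0 = Running tc0 F \<and> (\<forall>n. fa_step I' Sigma' C (f n) (f (Suc n))))"
    using no_inf assms by blast
  show "\<exists>r. (fa_step I' Sigma' C)\<^sup>*\<^sup>* (Running tc0 F) r \<and> (r = NoAssignment \<or> (\<exists>tc. r = Returned tc))"
    using term_run assms by blast
  {
    fix tc assume rt: "(fa_step I' Sigma' C)\<^sup>*\<^sup>* (Running tc0 F) (Returned tc)"
    have "Inv1 R F t tc0 (Returned tc)"
    proof (rule rt_inv[OF rt])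
      show "Inv1 R F t tc0 (Running tc0 F)" using init assms by (auto simp: Inv1_def fa_init_def)
    next
      fix s s' assume "fa_step I' Sigma' C s s'" "Inv1 R F t tc0 s"
      then show "Inv1 R F t tc0 s'" using step1[OF assms(4)] by blast
    qed
    then show "\<forall>B\<in>F. tc B = t B" unfolding Inv1_def by simp
    from rt obtain s where "(fa_step I' Sigma' C)\<^sup>*\<^sup>* (Running tc0 F) s" "fa_step I' Sigma' C s (Returned tc)"
      by (cases rule: rtranclp.cases) auto
    then show "\<forall>t'\<in>I' - C. \<forall>(X, A)\<in>Sigma'. \<not> (agree tc t' X \<and> tc A \<noteq> t' A)"
      by (auto elim: fa_step.cases)
  }
  {
    assume "\<exists>tg. (\<forall>B\<in>F. tg B = t B) \<and> (\<forall>t'\<in>I' - C. \<forall>fd\<in>Sigma'. \<not> violates tg t' fd)"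
    then obtain tg where tg: "\<forall>B\<in>F. tg B = t B" "\<forall>t'\<in>I' - C. \<forall>fd\<in>Sigma'. \<not> violates tg t' fd" by blast
    show "\<not> (fa_step I' Sigma' C)\<^sup>*\<^sup>* (Running tc0 F) NoAssignment"
    proof
      assume rt: "(fa_step I' Sigma' C)\<^sup>*\<^sup>* (Running tc0 F) NoAssignment"
      have "Inv2 R F tc0 tg NoAssignment"
      proof (rule rt_inv[OF rt])
        show "Inv2 R F tc0 tg (Running tc0 F)" using init assms tg by (auto simp: Inv2_def fa_init_def)
      next
        fix s s' assume "fa_step I' Sigma' C s s'" "Inv2 R F tc0 tg s"
        then show "Inv2 R F tc0 tg s'" using step2[OF assms(4) init tg(2)] by blast
      qed
      then show False unfolding Inv2_def by simp
    qed
  }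
qed

end
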